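(* Let $L>0$ and let $\phi$ satisfy (H_φ). If $z\in H^1_0(0,L)$ and $\phi(z)\in L^2(0,L)$, then $\int_0^L\phi(z)\frac{dz}{dx}\,dx=0$.
   Context: (H_φ): $\phi:\mathbb{R}\to\mathbb{R}\cup\{+\infty\}$ is continuous when $\mathbb{R}\cup\{+\infty\}$ carries its usual topology, and $\phi(s)<+\infty$ for every $s\neq0$. *)

theory Defs
  imports "HOL-Analysis.Analysis"
begin

text \<open>Hypothesis (H_phi): phi maps R into R \<union> {+\<infinity>} (modelled inside ereal, never -\<infinity>),
  is continuous, and is finite away from 0.\<close>
definition H_phi :: "(real \<Rightarrow> ereal) \<Rightarrow> bool" where
  "H_phi \<phi> \<longleftrightarrow> continuous_on UNIV \<phi> \<and> (\<forall>s. \<phi> s \<noteq> -\<infinity>) \<and> (\<forall>s. s \<noteq> 0 \<longrightarrow> \<phi> s < \<infinity>)"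

definition L2_on :: "real \<Rightarrow> (real \<Rightarrow> real) \<Rightarrow> bool" where
  "L2_on L f \<longleftrightarrow> f \<in> borel_measurable (lebesgue_on {0..L})
                 \<and> integrable (lebesgue_on {0..L}) (\<lambda>x. (f x)^2)"

text \<open>z \<in> H^1_0(0,L) with (weak) derivative dz = dz/dx, using the standard one-dimensional
  description: dz \<in> L^2(0,L), z agrees a.e. with the absolutely continuous function
  x \<mapsto> \<integral>_0^x dz, and this representative vanishes at 0 and at L.\<close>
definition H10_with_deriv :: "real \<Rightarrow> (real \<Rightarrow> real) \<Rightarrow> (real \<Rightarrow> real) \<Rightarrow> bool" where
  "H10_with_deriv L z dz \<longleftrightarrow> L2_on L dz
     \<and> (AE x in lebesgue_on {0..L}. z x = integral\<^sup>L (lebesgue_on {0..x}) dz)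
     \<and> integral\<^sup>L (lebesgue_on {0..L}) dz = 0"

end

theory Submission
  imports Defs
begin
lemma Iconst: "(u::real) \<le> v \<Longrightarrow> integral\<^sup>L (lebesgue_on {u..v}) (\<lambda>_. c::real) = c * (v - u)"
  by (simp add: measure_restrict_space)
lemma Icomb: "integrable (lebesgue_on {a..b}) (f::real\<Rightarrow>real) \<Longrightarrow> a \<le> c \<Longrightarrow> c \<le> b \<Longrightarrow> integral\<^sup>L (lebesgue_on {a..b}) f = integral\<^sup>L (lebesgue_on {a..c}) f + integral\<^sup>L (lebesgue_on {c..b}) f"
  by (rule Equivalence_Measurable_On_Borel.integral_combine)

lemma psi_step:
  fixes \<psi> :: "real \<Rightarrow> real"
  assumes cont: "continuous_on UNIV \<psi>" and uv: "u \<le> v" and b: "\<And>t. t \<in> {u..v} \<Longrightarrow> \<bar>\<psi> t - \<psi> c\<bar> \<le> \<epsilon>"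
  shows "\<bar>integral\<^sup>L (lebesgue_on {u..v}) \<psi> - \<psi> c * (v - u)\<bar> \<le> \<epsilon> * (v - u)"
proof -
  have int: "integrable (lebesgue_on {u..v}) \<psi>"
    by (rule continuous_imp_integrable_real) (use cont continuous_on_subset in blast)
  have "integral\<^sup>L (lebesgue_on {u..v}) \<psi> - \<psi> c * (v - u) = integral\<^sup>L (lebesgue_on {u..v}) (\<lambda>t. \<psi> t - \<psi> c)"
    using int uv by (simp add: Iconst measure_restrict_space)
  also have "\<bar>\<dots>\<bar> \<le> integral\<^sup>L (lebesgue_on {u..v}) (\<lambda>_. \<epsilon>)"
    using Bochner_Integration.integral_norm_bound_integral[of "lebesgue_on {u..v}" "\<lambda>t. \<psi> t - \<psi> c" "\<lambda>_. \<epsilon>"] int b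
    by (simp add: measure_restrict_space)
  also have "\<dots> = \<epsilon> * (v - u)" by (rule Iconst[OF uv])
  finally show ?thesis .
qed

lemma Psi_est:
  fixes \<psi> :: "real \<Rightarrow> real"
  assumes cont: "continuous_on UNIV \<psi>" and "-R \<le> u" "u \<le> R" "-R \<le> v" "v \<le> R"
    and b: "\<And>t. t \<in> {min u v..max u v} \<Longrightarrow> \<bar>\<psi> t - \<psi> u\<bar> \<le> \<epsilon>"
  shows "\<bar>(integral\<^sup>L (lebesgue_on {-R..v}) \<psi> - integral\<^sup>L (lebesgue_on {-R..u}) \<psi>) - \<psi> u * (v - u)\<bar> \<le> \<epsilon> * \<bar>v - u\<bar>"
proof (cases "u \<le> v")
  case True
  have "integrable (lebesgue_on {-R..v}) \<psi>"
    by (rule continuous_imp_integrable_real) (use cont continuous_on_subset in blast)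
  then have "integral\<^sup>L (lebesgue_on {-R..v}) \<psi> = integral\<^sup>L (lebesgue_on {-R..u}) \<psi> + integral\<^sup>L (lebesgue_on {u..v}) \<psi>"
    using Icomb assms True by blast
  moreover have "\<bar>integral\<^sup>L (lebesgue_on {u..v}) \<psi> - \<psi> u * (v - u)\<bar> \<le> \<epsilon> * (v - u)"
    using psi_step[OF cont True, of u \<epsilon>] b True by auto
  ultimately show ?thesis using True by simp
next
  case False
  have "integrable (lebesgue_on {-R..u}) \<psi>"
    by (rule continuous_imp_integrable_real) (use cont continuous_on_subset in blast)
  then have "integral\<^sup>L (lebesgue_on {-R..u}) \<psi> = integral\<^sup>L (lebesgue_on {-R..v}) \<psi> + integral\<^sup>L (lebesgue_on {v..u}) \<psi>"
    using Icomb assms False by simp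
  moreover have "\<bar>integral\<^sup>L (lebesgue_on {v..u}) \<psi> - \<psi> u * (u - v)\<bar> \<le> \<epsilon> * (u - v)"
    using psi_step[OF cont, of v u u \<epsilon>] b False by auto
  ultimately show ?thesis using False by (simp add: algebra_simps abs_minus_commute)
qed

lemma small_zero: "(\<And>\<epsilon>::real. \<epsilon> > 0 \<Longrightarrow> \<bar>a\<bar> \<le> \<epsilon> * c) \<Longrightarrow> a = 0"
proof (rule ccontr)
  assume h: "\<And>\<epsilon>::real. \<epsilon> > 0 \<Longrightarrow> \<bar>a\<bar> \<le> \<epsilon> * c" and a: "a \<noteq> 0"
  have c: "c > 0" using h[of 1] a by simp
  have "\<bar>a\<bar> \<le> (\<bar>a\<bar> / (2*c)) * c" using h[of "\<bar>a\<bar> / (2*c)"] a c by simp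
  then show False using a c by (simp add: field_simps)
qed

lemma lemA:
  fixes \<psi> g :: "real \<Rightarrow> real" and L :: real
  assumes psi: "continuous_on UNIV \<psi>" and g: "integrable (lebesgue_on {0..L}) g" and L: "0 \<le> L"
    and g0: "integral\<^sup>L (lebesgue_on {0..L}) g = 0"
  shows "integral\<^sup>L (lebesgue_on {0..L}) (\<lambda>x. \<psi> (integral\<^sup>L (lebesgue_on {0..x}) g) * g x) = 0"
proof -
  define Z where "Z x = integral\<^sup>L (lebesgue_on {0..x}) g" for x
  have gsub: "integrable (lebesgue_on {a..b}) g" if "0 \<le> a" "b \<le> L" for a b
    by (rule integrable_subinterval[OF g]) (use that in auto)
  have ZHK: "Z x = integral {0..x} g" if "x \<in> {0..L}" for x
    using has_integral_integral_lebesgue_on[OF gsub[of 0 x]] that unfolding Z_def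
    by (simp add: integral_unique)
  have gHK: "g integrable_on {0..L}" by (rule integrable_on_lebesgue_on[OF g]) simp
  have Zc: "continuous_on {0..L} Z"
    using continuous_on_eq[OF indefinite_integral_continuous_1[OF gHK]] ZHK by metis
  have Z0: "Z 0 = 0" using ZHK L by simp
  have ZL: "Z L = 0" using g0 Z_def by simp
  have Zdiff: "Z b - Z a = integral\<^sup>L (lebesgue_on {a..b}) g" if "0 \<le> a" "a \<le> b" "b \<le> L" for a b
    using Icomb[OF gsub[of 0 b], of a] that unfolding Z_def by simp
  obtain R where R: "R > 0" "\<And>x. x \<in> {0..L} \<Longrightarrow> \<bar>Z x\<bar> \<le> R"
    using compact_continuous_image[OF Zc compact_Icc] compact_imp_bounded bounded_pos
    by (metis image_eqI real_norm_def)
  define \<Psi> where "\<Psi> s = integral\<^sup>L (lebesgue_on {-R..s}) \<psi>" for s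
  define h where "h x = \<psi> (Z x) * g x" for x
  have pZc: "continuous_on {0..L} (\<lambda>x. \<psi> (Z x))"
    using continuous_on_compose2[OF psi Zc] by simp
  obtain B where B: "B > 0" "\<And>x. x \<in> {0..L} \<Longrightarrow> \<bar>\<psi> (Z x)\<bar> \<le> B"
    using compact_continuous_image[OF pZc compact_Icc] compact_imp_bounded bounded_pos
    by (metis image_eqI real_norm_def)
  have hint: "integrable (lebesgue_on {0..L}) h"
  proof (rule Bochner_Integration.integrable_bound[where f="\<lambda>x. B * g x"])
    show "integrable (lebesgue_on {0..L}) (\<lambda>x. B * g x)" using g by simp
    show "h \<in> borel_measurable (lebesgue_on {0..L})"
      unfolding h_def using continuous_imp_measurable_on_sets_lebesgue[OF pZc] borel_measurable_integrable[OF g]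
      by (simp add: borel_measurable_times)
    show "AE x in lebesgue_on {0..L}. norm (h x) \<le> norm (B * g x)"
      using B by (intro AE_I2) (auto simp: h_def abs_mult intro!: mult_right_mono)
  qed
  have hsub: "integrable (lebesgue_on {a..b}) h" if "0 \<le> a" "b \<le> L" for a b
    by (rule integrable_subinterval[OF hint]) (use that in auto)
  have agsub: "integrable (lebesgue_on {a..b}) (\<lambda>x. \<bar>g x\<bar>)" if "0 \<le> a" "b \<le> L" for a b
    using gsub[OF that] by simp
  have key: "\<bar>integral\<^sup>L (lebesgue_on {0..L}) h\<bar> \<le> \<epsilon> * (2 * integral\<^sup>L (lebesgue_on {0..L}) (\<lambda>x. \<bar>g x\<bar>))"
    if \<epsilon>: "\<epsilon> > 0" for \<epsilon>
  proof -
    have "uniformly_continuous_on {-R..R} \<psi>"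
      by (rule compact_uniformly_continuous) (use psi continuous_on_subset in auto)
    then obtain \<eta> where \<eta>: "\<eta> > 0" "\<And>s t. s \<in> {-R..R} \<Longrightarrow> t \<in> {-R..R} \<Longrightarrow> \<bar>s - t\<bar> < \<eta> \<Longrightarrow> \<bar>\<psi> s - \<psi> t\<bar> < \<epsilon>"
      unfolding uniformly_continuous_on_def dist_real_def using \<epsilon> by metis
    have "uniformly_continuous_on {0..L} Z"
      by (rule compact_uniformly_continuous[OF Zc]) simp
    then obtain \<delta> where \<delta>: "\<delta> > 0" "\<And>x y. x \<in> {0..L} \<Longrightarrow> y \<in> {0..L} \<Longrightarrow> \<bar>x - y\<bar> < \<delta> \<Longrightarrow> \<bar>Z x - Z y\<bar> < \<eta>"
      unfolding uniformly_continuous_on_def dist_real_def using \<eta> by metis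
    have E: "\<bar>integral\<^sup>L (lebesgue_on {a..b}) h - (\<Psi> (Z b) - \<Psi> (Z a))\<bar>
               \<le> 2 * \<epsilon> * integral\<^sup>L (lebesgue_on {a..b}) (\<lambda>x. \<bar>g x\<bar>)"
      if ab: "0 \<le> a" "a \<le> b" "b \<le> L" "b - a < \<delta>" for a b
    proof -
      have close: "\<bar>\<psi> (Z x) - \<psi> (Z a)\<bar> \<le> \<epsilon>" if "x \<in> {a..b}" for x
        using \<eta>(2)[of "Z x" "Z a"] \<delta>(2)[of x a] R(2)[of x] R(2)[of a] that ab by (auto simp: abs_le_iff)
      have e1: "\<psi> (Z a) * (Z b - Z a) = integral\<^sup>L (lebesgue_on {a..b}) (\<lambda>x. \<psi> (Z a) * g x)"
        using Zdiff[OF ab(1-3)] by simp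
      have e2: "integral\<^sup>L (lebesgue_on {a..b}) h - integral\<^sup>L (lebesgue_on {a..b}) (\<lambda>x. \<psi> (Z a) * g x)
            = integral\<^sup>L (lebesgue_on {a..b}) (\<lambda>x. (\<psi> (Z x) - \<psi> (Z a)) * g x)"
      proof -
        have f: "(\<lambda>x. (\<psi> (Z x) - \<psi> (Z a)) * g x) = (\<lambda>x. h x - \<psi> (Z a) * g x)"
          by (auto simp: h_def algebra_simps)
        show ?thesis unfolding f
          using hsub[of a b] gsub[of a b] ab
          by (subst Bochner_Integration.integral_diff) auto
      qed
      have "\<bar>integral\<^sup>L (lebesgue_on {a..b}) (\<lambda>x. (\<psi> (Z x) - \<psi> (Z a)) * g x)\<bar>
             \<le> integral\<^sup>L (lebesgue_on {a..b}) (\<lambda>x. \<epsilon> * \<bar>g x\<bar>)"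
      proof -
        have i1: "integrable (lebesgue_on {a..b}) (\<lambda>x. (\<psi> (Z x) - \<psi> (Z a)) * g x)"
        proof -
          have f: "(\<lambda>x. (\<psi> (Z x) - \<psi> (Z a)) * g x) = (\<lambda>x. h x - \<psi> (Z a) * g x)"
            by (auto simp: h_def algebra_simps)
          show ?thesis unfolding f using hsub[of a b] gsub[of a b] ab by auto
        qed
        show ?thesis
        proof -
          have bd: "norm ((\<psi> (Z x) - \<psi> (Z a)) * g x) \<le> \<epsilon> * \<bar>g x\<bar>"
            if "x \<in> space (lebesgue_on {a..b})" for x
            using close[of x] that by (auto simp: abs_mult intro!: mult_right_mono)
          have i2: "integrable (lebesgue_on {a..b}) (\<lambda>x. \<epsilon> * \<bar>g x\<bar>)"
            using agsub[of a b] ab by simp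
          show ?thesis
            using Bochner_Integration.integral_norm_bound_integral[OF i1 i2 bd] by simp
        qed
      qed
      then have p1: "\<bar>integral\<^sup>L (lebesgue_on {a..b}) h - \<psi> (Z a) * (Z b - Z a)\<bar>
             \<le> \<epsilon> * integral\<^sup>L (lebesgue_on {a..b}) (\<lambda>x. \<bar>g x\<bar>)"
        by (subst e1, subst e2) simp
      have p2: "\<bar>(\<Psi> (Z b) - \<Psi> (Z a)) - \<psi> (Z a) * (Z b - Z a)\<bar> \<le> \<epsilon> * \<bar>Z b - Z a\<bar>"
        unfolding \<Psi>_def
      proof (rule Psi_est[OF psi])
        show "-R \<le> Z a" "Z a \<le> R" "-R \<le> Z b" "Z b \<le> R" using R(2)[of a] R(2)[of b] ab by auto
        have zz: "\<bar>Z b - Z a\<bar> < \<eta>" using \<delta>(2)[of b a] ab by auto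
        show "\<bar>\<psi> t - \<psi> (Z a)\<bar> \<le> \<epsilon>" if "t \<in> {min (Z a) (Z b)..max (Z a) (Z b)}" for t
        proof -
          have t1: "-R \<le> t \<and> t \<le> R" using that R(2)[of a] R(2)[of b] ab
            by (auto simp: abs_le_iff min_def max_def split: if_splits)
          have t2: "\<bar>t - Z a\<bar> < \<eta>" using that zz
            by (auto simp: min_def max_def split: if_splits)
          show ?thesis using \<eta>(2)[of t "Z a"] t1 t2 R(2)[of a] ab by (auto simp: abs_le_iff)
        qed
      qed
      have p3: "\<bar>Z b - Z a\<bar> \<le> integral\<^sup>L (lebesgue_on {a..b}) (\<lambda>x. \<bar>g x\<bar>)"
        using Zdiff[OF ab(1-3)] integral_abs_bound by simp
      have "\<epsilon> * \<bar>Z b - Z a\<bar> \<le> \<epsilon> * integral\<^sup>L (lebesgue_on {a..b}) (\<lambda>x. \<bar>g x\<bar>)"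
        using p3 \<epsilon> by simp
      then show ?thesis using p1 p2 by linarith
    qed
    define X where "X m = min (real m * \<delta> / 2) L" for m :: nat
    have ind: "\<bar>integral\<^sup>L (lebesgue_on {0..X m}) h - (\<Psi> (Z (X m)) - \<Psi> (Z 0))\<bar>
               \<le> 2 * \<epsilon> * integral\<^sup>L (lebesgue_on {0..X m}) (\<lambda>x. \<bar>g x\<bar>)" for m
    proof (induction m)
      case 0
      show ?case using E[of 0 0] \<delta> L by (simp add: X_def)
    next
      case (Suc m)
      have x: "0 \<le> X m" "X m \<le> X (Suc m)" "X (Suc m) \<le> L" "X (Suc m) - X m < \<delta>"
        using L \<delta> by (auto simp: X_def min_def field_simps)
      have c1: "integral\<^sup>L (lebesgue_on {0..X (Suc m)}) h = integral\<^sup>L (lebesgue_on {0..X m}) h + integral\<^sup>L (lebesgue_on {X m..X (Suc m)}) h"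
        using Icomb[OF hsub[of 0 "X (Suc m)"]] x by simp
      have c2: "integral\<^sup>L (lebesgue_on {0..X (Suc m)}) (\<lambda>x. \<bar>g x\<bar>) = integral\<^sup>L (lebesgue_on {0..X m}) (\<lambda>x. \<bar>g x\<bar>) + integral\<^sup>L (lebesgue_on {X m..X (Suc m)}) (\<lambda>x. \<bar>g x\<bar>)"
        using Icomb[OF agsub[of 0 "X (Suc m)"]] x by simp
      show ?case using Suc.IH E[of "X m" "X (Suc m)"] x c1 c2 by (simp add: algebra_simps)
    qed
    obtain m :: nat where m: "2 * L / \<delta> \<le> real m" using real_arch_simple by blast
    have "X m = L" using m \<delta> L by (auto simp: X_def min_def field_simps)
    then show ?thesis using ind[of m] ZL Z0 by simp
  qed
  show ?thesis
    using small_zero[OF key] unfolding h_def Z_def by simp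
qed

lemma Zcont:
  fixes g :: "real \<Rightarrow> real"
  assumes g: "integrable (lebesgue_on {0..L}) g"
  shows "continuous_on {0..L} (\<lambda>x. integral\<^sup>L (lebesgue_on {0..x}) g)"
proof -
  have gsub: "integrable (lebesgue_on {a..b}) g" if "0 \<le> a" "b \<le> L" for a b
    by (rule integrable_subinterval[OF g]) (use that in auto)
  have ZHK: "integral\<^sup>L (lebesgue_on {0..x}) g = integral {0..x} g" if "x \<in> {0..L}" for x
    using has_integral_integral_lebesgue_on[OF gsub[of 0 x]] that
    by (simp add: integral_unique)
  have gHK: "g integrable_on {0..L}" by (rule integrable_on_lebesgue_on[OF g]) simp
  show ?thesis
    using continuous_on_eq[OF indefinite_integral_continuous_1[OF gHK]] ZHK by metis
qed

lemma aux1: "\<bar>a::real\<bar> \<le> \<bar>1 + a^2\<bar>"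
proof -
  have "\<bar>a\<bar> \<le> 1 + a^2"
  proof (cases "\<bar>a\<bar> \<le> 1")
    case True then show ?thesis by (smt (verit) zero_le_power2)
  next
    case False
    then have "\<bar>a\<bar> * 1 \<le> \<bar>a\<bar> * \<bar>a\<bar>" by (intro mult_left_mono) auto
    then show ?thesis by (simp add: power2_eq_square abs_mult[symmetric])
  qed
  then show ?thesis by linarith
qed

lemma aux2: "\<bar>(x::real) * y\<bar> \<le> \<bar>x^2 + y^2\<bar>"
proof -
  have "0 \<le> (\<bar>x\<bar> - \<bar>y\<bar>)^2" by simp
  then have "2 * (\<bar>x\<bar> * \<bar>y\<bar>) \<le> x^2 + y^2" by (simp add: power2_eq_square algebra_simps)
  moreover have "0 \<le> \<bar>x\<bar> * \<bar>y\<bar>" by simp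
  ultimately have "\<bar>x\<bar> * \<bar>y\<bar> \<le> x^2 + y^2" by linarith
  then show ?thesis by (simp add: abs_mult)
qed

theorem mainTheorem18:
  fixes L :: real and \<phi> :: "real \<Rightarrow> ereal" and z dz :: "real \<Rightarrow> real"
  assumes "L > 0"
    and "H_phi \<phi>"
    and "H10_with_deriv L z dz"
    and "AE x in lebesgue_on {0..L}. \<phi> (z x) \<noteq> \<infinity>"
    and "L2_on L (\<lambda>x. real_of_ereal (\<phi> (z x)))"
  shows "integral\<^sup>L (lebesgue_on {0..L}) (\<lambda>x. real_of_ereal (\<phi> (z x)) * dz x) = 0"
proof -
  have dzm: "dz \<in> borel_measurable (lebesgue_on {0..L})"
    and dz2: "integrable (lebesgue_on {0..L}) (\<lambda>x. (dz x)^2)"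
    and aez: "AE x in lebesgue_on {0..L}. z x = integral\<^sup>L (lebesgue_on {0..x}) dz"
    and dz0: "integral\<^sup>L (lebesgue_on {0..L}) dz = 0"
    using assms(3) unfolding H10_with_deriv_def L2_on_def by auto
  define F where "F x = real_of_ereal (\<phi> (z x))" for x
  have Fm: "F \<in> borel_measurable (lebesgue_on {0..L})"
    and F2: "integrable (lebesgue_on {0..L}) (\<lambda>x. (F x)^2)"
    using assms(5) unfolding F_def L2_on_def by auto
  have phic: "continuous_on UNIV \<phi>" and phin: "\<And>s. \<phi> s \<noteq> -\<infinity>" and phif: "\<And>s. s \<noteq> 0 \<Longrightarrow> \<phi> s < \<infinity>"
    using assms(2) unfolding H_phi_def by auto
  have one: "integrable (lebesgue_on {0..L}) (\<lambda>x. 1::real)"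
    by (rule continuous_imp_integrable_real) simp
  have dzi: "integrable (lebesgue_on {0..L}) dz"
  proof (rule Bochner_Integration.integrable_bound[where f="\<lambda>x. 1 + (dz x)^2"])
    show "integrable (lebesgue_on {0..L}) (\<lambda>x. 1 + (dz x)^2)" using one dz2 by simp
    show "dz \<in> borel_measurable (lebesgue_on {0..L})" by (rule dzm)
    show "AE x in lebesgue_on {0..L}. norm (dz x) \<le> norm (1 + (dz x)^2)"
      by (intro AE_I2) (metis aux1 real_norm_def)
  qed
  have Fdzi: "integrable (lebesgue_on {0..L}) (\<lambda>x. F x * dz x)"
  proof (rule Bochner_Integration.integrable_bound[where f="\<lambda>x. (F x)^2 + (dz x)^2"])
    show "integrable (lebesgue_on {0..L}) (\<lambda>x. (F x)^2 + (dz x)^2)" using F2 dz2 by simp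
    show "(\<lambda>x. F x * dz x) \<in> borel_measurable (lebesgue_on {0..L})" using Fm dzm by simp
    show "AE x in lebesgue_on {0..L}. norm (F x * dz x) \<le> norm ((F x)^2 + (dz x)^2)"
      by (intro AE_I2) (metis aux2 real_norm_def)
  qed
  define Z where "Z x = integral\<^sup>L (lebesgue_on {0..x}) dz" for x
  have Zc: "continuous_on {0..L} Z" unfolding Z_def by (rule Zcont[OF dzi])
  have aez': "AE x in lebesgue_on {0..L}. z x = Z x" using aez unfolding Z_def .
  have lem: "integral\<^sup>L (lebesgue_on {0..L}) (\<lambda>x. \<psi> (Z x) * dz x) = 0" if "continuous_on UNIV \<psi>" for \<psi>
    unfolding Z_def using lemA[OF that dzi _ dz0] assms(1) by simp
  have meas: "(\<lambda>x. \<psi> (Z x) * dz x) \<in> borel_measurable (lebesgue_on {0..L})" if "continuous_on UNIV \<psi>" for \<psi>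
  proof -
    have "continuous_on {0..L} (\<lambda>x. \<psi> (Z x))"
      using continuous_on_compose2[OF that Zc] by simp
    then have "(\<lambda>x. \<psi> (Z x)) \<in> borel_measurable (lebesgue_on {0..L})"
      by (rule continuous_imp_measurable_on_sets_lebesgue) simp
    then show ?thesis using dzm by simp
  qed
  have Fdzm: "(\<lambda>x. F x * dz x) \<in> borel_measurable (lebesgue_on {0..L})"
    using Fdzi by (rule borel_measurable_integrable)
  show ?thesis
  proof (cases "\<phi> 0 = \<infinity>")
    case False
    then have fin: "\<bar>\<phi> s\<bar> \<noteq> \<infinity>" for s
      using phin[of s] phif[of s] by (cases "\<phi> s"; cases "s = 0") auto
    have pc: "continuous_on UNIV (\<lambda>s. real_of_ereal (\<phi> s))"
      using continuous_on_iff_real[of UNIV \<phi>] fin phic by (simp add: o_def)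
    have "integral\<^sup>L (lebesgue_on {0..L}) (\<lambda>x. F x * dz x)
        = integral\<^sup>L (lebesgue_on {0..L}) (\<lambda>x. real_of_ereal (\<phi> (Z x)) * dz x)"
      by (rule integral_cong_AE[OF Fdzm meas[OF pc]]) (use aez' in \<open>auto simp: F_def\<close>)
    then show ?thesis using lem[OF pc] by (simp add: F_def)
  next
    case True
    define c where "c n s = min 1 (max 0 (real (Suc n) * \<bar>s\<bar> - 1))" for n :: nat and s :: real
    define \<psi> where "\<psi> n s = real_of_ereal (\<phi> s) * c n s" for n s
    have pc: "continuous_on UNIV (\<psi> n)" for n
    proof -
      have "isCont (\<psi> n) s" for s
      proof (cases "s = 0")
        case True
        have h0: "\<psi> n t = 0" if "dist t s < 1 / real (Suc n)" for t
        proof -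
          have "real (Suc n) * \<bar>t\<bar> < 1" using True that
            by (simp add: dist_real_def field_simps)
          then show "\<psi> n t = 0" by (simp add: \<psi>_def c_def)
        qed
        have "eventually (\<lambda>t. \<psi> n t = 0) (at s)"
          unfolding eventually_at using h0 by (intro exI[of _ "1 / real (Suc n)"]) auto
        moreover have "\<psi> n s = 0" using True by (simp add: \<psi>_def c_def)
        ultimately show ?thesis unfolding isCont_def by (simp add: tendsto_eventually)
      next
        case False
        have fin: "\<bar>\<phi> s\<bar> \<noteq> \<infinity>"
          using phin[of s] phif[OF False] by (cases "\<phi> s") auto
        have "isCont \<phi> s" using phic by (simp add: continuous_on_eq_continuous_at)
        then have c1: "isCont (\<lambda>s. real_of_ereal (\<phi> s)) s"
          using continuous_at_compose[of s \<phi> real_of_ereal] continuous_at_of_ereal[OF fin]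
          by (simp add: o_def)
        have c2: "isCont (c n) s" unfolding c_def by (intro continuous_intros)
        show ?thesis unfolding \<psi>_def using isCont_mult[OF c1 c2] by simp
      qed
      then show ?thesis by (simp add: continuous_at_imp_continuous_on)
    qed
    have "(\<lambda>n. integral\<^sup>L (lebesgue_on {0..L}) (\<lambda>x. \<psi> n (Z x) * dz x))
          \<longlonglongrightarrow> integral\<^sup>L (lebesgue_on {0..L}) (\<lambda>x. F x * dz x)"
    proof (rule integral_dominated_convergence[where w="\<lambda>x. \<bar>F x * dz x\<bar>"])
      show "(\<lambda>x. F x * dz x) \<in> borel_measurable (lebesgue_on {0..L})" by (rule Fdzm)
      show "(\<lambda>x. \<psi> i (Z x) * dz x) \<in> borel_measurable (lebesgue_on {0..L})" for i
        by (rule meas[OF pc])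
      show "integrable (lebesgue_on {0..L}) (\<lambda>x. \<bar>F x * dz x\<bar>)" using Fdzi by simp
      show "AE x in lebesgue_on {0..L}. (\<lambda>i. \<psi> i (Z x) * dz x) \<longlonglongrightarrow> F x * dz x"
        using aez' assms(4)
      proof eventually_elim
        case (elim x)
        have Z0: "Z x \<noteq> 0" using elim True by auto
        obtain N :: nat where N: "2 / \<bar>Z x\<bar> \<le> real N" using real_arch_simple by blast
        have "\<psi> n (Z x) * dz x = F x * dz x" if "n \<ge> N" for n
        proof -
          have "2 / \<bar>Z x\<bar> \<le> real (Suc n)" using N that by simp
          then have "2 \<le> real (Suc n) * \<bar>Z x\<bar>" using Z0 by (simp add: field_simps)
          then have "c n (Z x) = 1" by (simp add: c_def)
          then show ?thesis using elim by (simp add: \<psi>_def F_def)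
        qed
        then show ?case by (intro tendsto_eventually) (auto simp: eventually_sequentially)
      qed
      show "AE x in lebesgue_on {0..L}. norm (\<psi> i (Z x) * dz x) \<le> \<bar>F x * dz x\<bar>" for i
        using aez'
      proof eventually_elim
        case (elim x)
        have "\<bar>c i (Z x)\<bar> \<le> 1" by (auto simp: c_def)
        then have "\<bar>real_of_ereal (\<phi> (Z x))\<bar> * \<bar>c i (Z x)\<bar> \<le> \<bar>real_of_ereal (\<phi> (Z x))\<bar> * 1"
          by (rule mult_left_mono) (rule abs_ge_zero)
        then have "\<bar>real_of_ereal (\<phi> (Z x))\<bar> * \<bar>c i (Z x)\<bar> * \<bar>dz x\<bar> \<le> \<bar>real_of_ereal (\<phi> (Z x))\<bar> * 1 * \<bar>dz x\<bar>"
          by (rule mult_right_mono) (rule abs_ge_zero)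
        then show ?case using elim by (simp add: \<psi>_def F_def abs_mult)
      qed
    qed
    moreover have "(\<lambda>n. integral\<^sup>L (lebesgue_on {0..L}) (\<lambda>x. \<psi> n (Z x) * dz x)) = (\<lambda>n. 0)"
      using lem[OF pc] by simp
    ultimately have "integral\<^sup>L (lebesgue_on {0..L}) (\<lambda>x. F x * dz x) = 0"
      using LIMSEQ_unique tendsto_const by metis
    then show ?thesis by (simp add: F_def)
  qed
qed
end
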